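(* Let $m \ge 1$ and $n \ge 2m+3$ be integers, and write $p_j = n-2m+2j$. Then for every real $r$ with $|r|<1$, $$\int_{-1}^1 \frac{T_n(s)(1-s^2)^{m-\frac{1}{2}}}{(s-r)^4}\,ds = (-1)^{m+1}\left(\frac{1}{2}\right)^{2m+2}\frac{1}{3}\frac{\pi}{(1-r^2)^2}\sum_{j=0}^{2m-1}(-1)^j\binom{2m-1}{j}(p_j+1)\Big\{(p_j+2)(p_j+3)U_{p_j-2}(r)-\big[2p_j^2+4p_j-6\big]U_{p_j}(r)+p_j(p_j-1)U_{p_j+2}(r)\Big\},$$ where the integral is a Hadamard finite-part integral.
   Context: $T_k(s)=\cos(k\cos^{-1}s)$ and $U_k(s)=\frac{\sin((k+1)\cos^{-1}s)}{\sin(\cos^{-1}s)}$ are the Tchebyshev polynomials of the first and second kinds. For a positive integer $\alpha\ge 2$ and $|r|<1$, the integral $\int_{-1}^1 \frac{D(s)}{(s-r)^\alpha}ds$ is understood in the Hadamard finite-part sense; in particular it satisfies $\int_{-1}^1 \frac{D(s)}{(s-r)^{\alpha}}ds=\frac{1}{\alpha-1}\frac{d}{dr}\int_{-1}^1\frac{D(s)}{(s-r)^{\alpha-1}}ds$, where for $\alpha-1=1$ the right-hand integral is a Cauchy principal value. $\binom{a}{j}=\frac{a!}{j!(a-j)!}$. *)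

theory Defs
  imports "HOL-Analysis.Analysis"
begin

definition chebT :: "nat \<Rightarrow> real \<Rightarrow> real" where
  "chebT k s = cos (real k * arccos s)"

definition chebU :: "nat \<Rightarrow> real \<Rightarrow> real" where
  "chebU k s = sin ((real k + 1) * arccos s) / sin (arccos s)"

definition cpv_integral :: "(real \<Rightarrow> real) \<Rightarrow> real \<Rightarrow> real" where
  "cpv_integral D r =
     Lim (at_right 0)
       (\<lambda>e. integral {-1..r-e} (\<lambda>s. D s / (s - r)) + integral {r+e..1} (\<lambda>s. D s / (s - r)))"

fun hadamard_fp :: "(real \<Rightarrow> real) \<Rightarrow> nat \<Rightarrow> real \<Rightarrow> real" where
  "hadamard_fp D 0 r = undefined"
| "hadamard_fp D (Suc 0) r = cpv_integral D r"
| "hadamard_fp D (Suc (Suc k)) r = deriv (hadamard_fp D (Suc k)) r / real (Suc k)"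

end

theory Submission
  imports Defs
begin


fun Tf :: "nat \<Rightarrow> real \<Rightarrow> real" where
  "Tf 0 x = 1" | "Tf (Suc 0) x = x" | "Tf (Suc (Suc k)) x = 2*x*Tf (Suc k) x - Tf k x"
fun Uf :: "nat \<Rightarrow> real \<Rightarrow> real" where
  "Uf 0 x = 1" | "Uf (Suc 0) x = 2*x" | "Uf (Suc (Suc k)) x = 2*x*Uf (Suc k) x - Uf k x"
fun dU :: "nat \<Rightarrow> real \<Rightarrow> real" where
  "dU 0 x = 0" | "dU (Suc 0) x = 2" | "dU (Suc (Suc k)) x = 2*Uf (Suc k) x + 2*x*dU (Suc k) x - dU k x"
fun ddU :: "nat \<Rightarrow> real \<Rightarrow> real" where
  "ddU 0 x = 0" | "ddU (Suc 0) x = 0" | "ddU (Suc (Suc k)) x = 4*dU (Suc k) x + 2*x*ddU (Suc k) x - ddU k x"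

lemma two_induct: 
  assumes "P 0" "P 1" "\<And>k. P k \<Longrightarrow> P (Suc k) \<Longrightarrow> P (Suc (Suc k))"
  shows "P n"
proof -
  have "P n \<and> P (Suc n)" by (induction n) (use assms in auto)
  thus ?thesis by simp
qed

lemma TU1: "Tf (Suc (Suc k)) x = x * Uf (Suc k) x - Uf k x"
proof (induction k rule: two_induct)
  case (3 k)
  have "Tf (Suc (Suc (Suc (Suc k)))) x = 2*x*(2*x*Tf (Suc (Suc k)) x - Tf (Suc k) x) - Tf (Suc (Suc k)) x" by simp
  also have "\<dots> = x * Uf (Suc (Suc (Suc k))) x - Uf (Suc (Suc k)) x" using 3 by (simp add: algebra_simps) algebra
  finally show ?case .
qed (auto simp: algebra_simps)

lemma TU3: "(1 - x^2) * Uf k x = x * Tf (Suc k) x - Tf (Suc (Suc k)) x"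
proof (induction k rule: two_induct)
  case (3 k)
  show ?case using 3 by (simp add: algebra_simps) algebra
qed (auto simp: algebra_simps power2_eq_square)

lemma DU: "(Uf k has_real_derivative dU k x) (at x)"
proof (induction k rule: two_induct)
  case (3 k)
  then show ?case by (auto intro!: derivative_eq_intros)
qed (auto intro!: derivative_eq_intros)

lemma DDU: "(dU k has_real_derivative ddU k x) (at x)"
proof (induction k rule: two_induct)
  case (3 k)
  then show ?case by (auto intro!: derivative_eq_intros DU)
qed (auto intro!: derivative_eq_intros)

lemma DT: "(Tf (Suc k) has_real_derivative (real (Suc k) * Uf k x)) (at x)"
proof (induction k rule: two_induct)
  case 1 then show ?case by (auto intro!: derivative_eq_intros)
next
  case 2 then show ?case by (auto intro!: derivative_eq_intros)
next
  case (3 k)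
  have e: "Tf (Suc (Suc (Suc k))) = (\<lambda>x. 2*x*Tf (Suc (Suc k)) x - Tf (Suc k) x)" by auto
  show ?case unfolding e
    apply (rule derivative_eq_intros 3 | simp)+
    using TU1[of k x] by (simp add: algebra_simps)
qed

lemma dUid: "(1 - x^2) * dU k x = x * Uf k x - real (Suc k) * Tf (Suc k) x"
proof (induction k rule: two_induct)
  case (3 k)
  have a: "(1 - x^2) * Uf (Suc k) x = x * Tf (Suc (Suc k)) x - Tf (Suc (Suc (Suc k))) x" by (rule TU3)
  show ?case using 3 a by (simp add: algebra_simps) algebra
qed (auto simp: algebra_simps power2_eq_square)

lemma ddUid: "(1 - x^2) * ddU k x = 3 * x * dU k x - real k * (real k + 2) * Uf k x"
proof -
  have d1: "((\<lambda>x. (1 - x^2) * dU k x) has_real_derivative (-2*x*dU k x + (1-x^2)*ddU k x)) (at x)"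
    by (auto intro!: derivative_eq_intros DU DDU)
  have d2: "((\<lambda>x. x * Uf k x - real (Suc k) * Tf (Suc k) x) has_real_derivative
      (Uf k x + x * dU k x - real (Suc k) * (real (Suc k) * Uf k x))) (at x)"
    by (auto intro!: derivative_eq_intros DU DT)
  have "(\<lambda>x. (1 - x^2) * dU k x) = (\<lambda>x. x * Uf k x - real (Suc k) * Tf (Suc k) x)"
    using dUid by auto
  with d1 d2 have "-2*x*dU k x + (1-x^2)*ddU k x = Uf k x + x * dU k x - real (Suc k) * (real (Suc k) * Uf k x)"
    using DERIV_unique by metis
  then show ?thesis by (simp add: algebra_simps power2_eq_square)
qed

lemma final_id:
  assumes "p \<ge> 2"
  shows "(1 - x^2)^2 * ddU p x = (1/4) * ((real p + 2) * (real p + 3) * Uf (p - 2) x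
         - (2 * (real p)^2 + 4 * real p - 6) * Uf p x + real p * (real p - 1) * Uf (p + 2) x)"
proof -
  obtain q where q: "p = Suc (Suc q)" using assms by (metis add_2_eq_Suc le_Suc_ex)
  have u1: "Uf (Suc (Suc (Suc q))) x = 2*x*Uf (Suc (Suc q)) x - Uf (Suc q) x" by simp
  have u2: "Uf (Suc (Suc q)) x = 2*x*Uf (Suc q) x - Uf q x" by simp
  have u3: "Uf (Suc (Suc (Suc (Suc q)))) x = 2*x*Uf (Suc (Suc (Suc q))) x - Uf (Suc (Suc q)) x" by simp
  have t: "Tf (Suc (Suc (Suc q))) x = x * Uf (Suc (Suc q)) x - Uf (Suc q) x" by (rule TU1)
  have b: "(1 - x^2) * dU p x = x * Uf p x - real (Suc p) * Tf (Suc p) x" by (rule dUid)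
  have c: "(1 - x^2) * ddU p x = 3 * x * dU p x - real p * (real p + 2) * Uf p x" by (rule ddUid)
  show ?thesis using u1 u2 u3 t b c unfolding q
    by (simp add: algebra_simps power2_eq_square) algebra
qed



lemma cos_rec: "cos ((real k + 2) * t) = 2 * cos t * cos ((real k + 1) * t) - cos (real k * t)"
proof -
  have "cos ((real k + 2) * t) = cos ((real k + 1) * t + t)" by (simp add: algebra_simps)
  moreover have "cos (real k * t) = cos ((real k + 1) * t - t)" by (simp add: algebra_simps)
  ultimately show ?thesis by (simp add: cos_add cos_diff)
qed

lemma sin_rec: "sin ((real k + 3) * t) = 2 * cos t * sin ((real k + 2) * t) - sin ((real k + 1) * t)"
proof -
  have "sin ((real k + 3) * t) = sin ((real k + 2) * t + t)" by (simp add: algebra_simps)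
  moreover have "sin ((real k + 1) * t) = sin ((real k + 2) * t - t)" by (simp add: algebra_simps)
  ultimately show ?thesis by (simp add: sin_add sin_diff)
qed

lemma Tf_cos: "Tf k (cos t) = cos (real k * t)"
proof (induction k rule: two_induct)
  case 2 then show ?case by simp
next
  case (3 k) then show ?case using cos_rec[of k t] by (simp add: algebra_simps)
qed simp

lemma Uf_cos: "Uf k (cos t) * sin t = sin ((real k + 1) * t)"
proof (induction k rule: two_induct)
  case 2 then show ?case using sin_double[of t] by (simp add: algebra_simps)
next
  case (3 k)
  have "Uf (Suc (Suc k)) (cos t) * sin t = 2 * cos t * (Uf (Suc k) (cos t) * sin t) - Uf k (cos t) * sin t"
    by (simp add: algebra_simps)
  also have "\<dots> = sin ((real (Suc (Suc k)) + 1) * t)" using 3 sin_rec[of k t] by (simp add: algebra_simps)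
  finally show ?case .
qed simp

lemma chebT_Tf: "-1 \<le> s \<Longrightarrow> s \<le> 1 \<Longrightarrow> chebT n s = Tf n s"
  using Tf_cos[of n "arccos s"] by (simp add: chebT_def cos_arccos)

lemma chebU_Uf: assumes "-1 < r" "r < 1" shows "chebU k r = Uf k r"
proof -
  have "sin (arccos r) > 0" using assms by (simp add: sin_arccos abs_square_less_1 abs_less_iff)
  then show ?thesis using Uf_cos[of k "arccos r"] assms by (simp add: chebU_def cos_arccos field_simps)
qed


lemma term_eq:
  fixes t :: real
  assumes k: "k \<le> N"
  shows "of_nat (N choose k) * cis t ^ k * (- cis (-t))^(N-k) * cis (real n * t) =
     complex_of_real (real (N choose k) * (-1)^(N-k)) * cis ((real n + 2 * real k - real N) * t)"
proof -
  have m1: "(- cis (-t))^(N-k) = (-1)^(N-k) * cis (-t)^(N-k)" by (rule power_minus)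
  have 1: "cis t ^ k * (- cis (-t))^(N-k) * cis (real n * t) = (-1)^(N-k) * (cis (real k * t) * cis (real (N-k) * (-t)) * cis (real n * t))"
    unfolding m1 Complex.DeMoivre by (simp only: mult_ac)
  have arg: "real k * t + real (N-k) * (-t) + real n * t = (real n + 2 * real k - real N) * t"
    using k by (simp add: of_nat_diff algebra_simps)
  have 2: "cis (real k * t) * cis (real (N-k) * (-t)) * cis (real n * t) = cis ((real n + 2 * real k - real N) * t)"
    by (simp only: cis_mult arg)
  have "of_nat (N choose k) * cis t ^ k * (- cis (-t))^(N-k) * cis (real n * t) =
     of_nat (N choose k) * (cis t ^ k * (- cis (-t))^(N-k) * cis (real n * t))" by (simp only: mult.assoc)
  also have "\<dots> = of_nat (N choose k) * ((-1)^(N-k) * cis ((real n + 2 * real k - real N) * t))"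
    by (simp only: 1 2)
  also have "\<dots> = complex_of_real (real (N choose k) * (-1)^(N-k)) * cis ((real n + 2 * real k - real N) * t)"
    by simp
  finally show ?thesis .
qed

lemma trig_binom:
  fixes t :: real and m n :: nat
  assumes m: "m \<ge> 1" and n: "n \<ge> 2*m"
  shows "cos (real n * t) * sin t ^ (2*m-1) =
    (\<Sum>j=0..2*m-1. (-1)^m * (1/2)^(2*m-1) * (-1)^j * real ((2*m-1) choose j) * sin ((real (n-2*m+2*j) + 1) * t))"
proof -
  define N where "N = 2*m-1"
  have s: "cis t + (- cis (-t)) = complex_of_real (sin t) * (2*\<i>)"
    by (simp add: complex_eq_iff)
  have "(complex_of_real (sin t) * (2*\<i>))^N * cis (real n * t) =
        (\<Sum>k\<le>N. of_nat (N choose k) * cis t ^ k * (- cis (-t))^(N-k)) * cis (real n * t)"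
    unfolding s[symmetric] binomial_ring ..
  also have "\<dots> = (\<Sum>k\<le>N. complex_of_real (real (N choose k) * (-1)^(N-k)) * cis ((real n + 2 * real k - real N) * t))"
    unfolding sum_distrib_right by (intro sum.cong refl term_eq) simp
  finally have eq: "Im ((complex_of_real (sin t) * (2*\<i>))^N * cis (real n * t)) =
      (\<Sum>k\<le>N. real (N choose k) * (-1)^(N-k) * sin ((real n + 2 * real k - real N) * t))"
    by (simp add: Im_sum)
  have iN: "\<i>^N = (-1)^(m-1) * \<i>"
  proof -
    have "N = Suc (2*(m-1))" using m by (simp add: N_def)
    then have "\<i>^N = \<i> * (\<i>^2)^(m-1)" by (simp only: power_Suc power_mult)
    then show ?thesis by simp
  qed
  have "Im ((complex_of_real (sin t) * (2*\<i>))^N * cis (real n * t)) = 2^N * (-1)^(m-1) * sin t ^ N * cos (real n * t)"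
    by (simp add: power_mult_distrib iN) 
  with eq have main: "2^N * (-1)^(m-1) * sin t ^ N * cos (real n * t) = (\<Sum>k\<le>N. real (N choose k) * (-1)^(N-k) * sin ((real n + 2 * real k - real N) * t))"
    by simp
  have sgn: "(-1::real)^(N-k) = - ((-1)^k)" if "k \<le> N" for k
  proof -
    have a: "(-1::real)^(N-k) * (-1)^k = (-1)^N" using that by (simp add: power_add[symmetric])
    have b: "(-1::real)^N = -1" using m by (simp add: N_def)
    have c: "(-1::real)^k * (-1)^k = 1" by (simp add: power_add[symmetric])
    have "(-1::real)^(N-k) = ((-1)^(N-k) * (-1)^k) * (-1)^k" using c by (simp add: mult.assoc)
    also have "\<dots> = - ((-1)^k)" unfolding a b by simp
    finally show ?thesis .
  qed
  define S where "S = (\<Sum>j=0..N. (-1)^j * real (N choose j) * sin ((real (n-2*m+2*j) + 1) * t))"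
  have "(\<Sum>k\<le>N. real (N choose k) * (-1)^(N-k) * sin ((real n + 2 * real k - real N) * t)) = - S"
    unfolding S_def atLeast0AtMost sum_negf[symmetric]
  proof (rule sum.cong[OF refl])
    fix k assume k: "k \<in> {..N}"
    have a: "real n + 2 * real k - real N = real (n-2*m+2*k) + 1" using m n by (simp add: N_def of_nat_diff)
    show "real (N choose k) * (-1)^(N-k) * sin ((real n + 2 * real k - real N) * t) =
       - ((-1)^k * real (N choose k) * sin ((real (n-2*m+2*k) + 1) * t))" using sgn[of k] k by (simp only: a) simp
  qed
  with main have "2^N * (-1)^(m-1) * sin t ^ N * cos (real n * t) = - S" by simp
  moreover have "(-1::real)^(m-1) = - ((-1)^m)" using m
    by (cases m) auto
  ultimately have "2^N * (-1)^m * (sin t ^ N * cos (real n * t)) = S" by (simp add: algebra_simps)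
  then have h1: "(-1)^m * (1/2)^N * (2^N * (-1)^m * (sin t ^ N * cos (real n * t))) = (-1)^m * (1/2)^N * S" by simp
  have h2: "(-1)^m * (1/2)^N * (2^N * (-1)^m * (sin t ^ N * cos (real n * t))) =
     ((-1)^m * (-1)^m) * ((1/2)^N * 2^N) * (sin t ^ N * cos (real n * t))" by (simp only: mult_ac)
  have h3: "((-1::real)^m * (-1)^m) = 1" by (simp add: power_add[symmetric])
  have h4: "((1/2::real)^N * 2^N) = 1" by (simp add: power_mult_distrib[symmetric])
  have "cos (real n * t) * sin t ^ N = (-1)^m * (1/2)^N * S" using h1 unfolding h2 h3 h4 by (simp add: mult.commute)
  then show ?thesis unfolding S_def N_def[symmetric] sum_distrib_left by (simp add: mult_ac)
qed


definition w :: "real \<Rightarrow> real" where "w s = sqrt (1 - s^2)"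
definition acoef :: "nat \<Rightarrow> nat \<Rightarrow> real" where
  "acoef m j = (-1)^m * (1/2)^(2*m-1) * (-1)^j * real ((2*m-1) choose j)"

lemma powr_sin: 
  assumes m: "m \<ge> 1" and x: "x \<ge> 0"
  shows "(x^2) powr (real m - 1/2) = x ^ (2*m-1)"
proof (cases "x = 0")
  case True then show ?thesis using m by simp
next
  case False
  then have xp: "x > 0" using x by simp
  have "(x^2) powr (real m - 1/2) = (x powr 2) powr (real m - 1/2)" using xp by (simp add: powr_realpow)
  also have "\<dots> = x powr (real (2*m-1))" using m by (simp add: powr_powr of_nat_diff algebra_simps)
  also have "\<dots> = x ^ (2*m-1)" using xp by (simp add: powr_realpow)
  finally show ?thesis .
qed

lemma D_repr:
  assumes m: "m \<ge> 1" and n: "n \<ge> 2*m" and s: "-1 \<le> s" "s \<le> 1"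
  shows "chebT n s * (1 - s^2) powr (real m - 1/2) =
     (\<Sum>j=0..2*m-1. acoef m j * (w s * Uf (n-2*m+2*j) s))"
proof -
  define t where "t = arccos s"
  have ct: "cos t = s" using s by (simp add: t_def cos_arccos)
  have st: "sin t = w s" using s by (simp add: t_def sin_arccos w_def)
  have st0: "sin t \<ge> 0" using s by (simp add: t_def sin_arccos abs_square_le_1 abs_le_iff)
  have "chebT n s = cos (real n * t)" by (simp add: chebT_def t_def)
  moreover have "(1 - s^2) powr (real m - 1/2) = sin t ^ (2*m-1)"
  proof -
    have "1 - s^2 = (sin t)^2" using ct by (simp add: sin_squared_eq)
    then show ?thesis using powr_sin[OF m st0] by simp
  qed
  moreover have "w s * Uf k s = sin ((real k + 1) * t)" for k
    using Uf_cos[of k t] ct st by (simp add: mult.commute)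
  ultimately show ?thesis using trig_binom[OF m n, of t] by (simp add: acoef_def mult_ac)
qed


definition Sint :: "(real \<Rightarrow> real) \<Rightarrow> real \<Rightarrow> real \<Rightarrow> real" where
  "Sint f r e = integral {-1..r-e} (\<lambda>s. f s / (s - r)) + integral {r+e..1} (\<lambda>s. f s / (s - r))"

definition has_cpv :: "(real \<Rightarrow> real) \<Rightarrow> real \<Rightarrow> real \<Rightarrow> bool" where
  "has_cpv f r L \<longleftrightarrow> ((\<lambda>e. Sint f r e) \<longlongrightarrow> L) (at_right 0)"

lemma cpv_eq: "has_cpv f r L \<Longrightarrow> cpv_integral f r = L"
  unfolding has_cpv_def cpv_integral_def Sint_def by (rule tendsto_Lim) auto

lemma ev_pos: "eventually (\<lambda>e::real. e > 0) (at_right 0)"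
  by (simp add: eventually_at_right_field) (use zero_less_one in blast)

lemma has_cpv_cong:
  assumes r: "-1 < r" "r < 1" and fg: "\<And>s. -1 \<le> s \<Longrightarrow> s \<le> 1 \<Longrightarrow> f s = g s" and h: "has_cpv f r L"
  shows "has_cpv g r L"
proof -
  have "eventually (\<lambda>e. Sint f r e = Sint g r e) (at_right 0)"
    using ev_pos
  proof (rule eventually_mono)
    fix e :: real assume e: "e > 0"
    show "Sint f r e = Sint g r e" unfolding Sint_def
      by (intro arg_cong2[where f="(+)"] integral_cong) (use e r fg in auto)
  qed
  then show ?thesis using h unfolding has_cpv_def by (rule tendsto_cong[THEN iffD1])
qed

lemma int_left:
  fixes f :: "real \<Rightarrow> real" and r e :: real
  assumes r: "-1 < r" "r < 1" and e: "e > 0" and f: "continuous_on {-1..1} f"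
  shows "(\<lambda>s. f s / (s - r)) integrable_on {-1..r-e}"
proof (rule integrable_continuous_interval)
  show "continuous_on {-1..r-e} (\<lambda>s. f s / (s - r))"
    using e r by (intro continuous_intros continuous_on_subset[OF f]) auto
qed

lemma int_right:
  fixes f :: "real \<Rightarrow> real" and r e :: real
  assumes r: "-1 < r" "r < 1" and e: "e > 0" and f: "continuous_on {-1..1} f"
  shows "(\<lambda>s. f s / (s - r)) integrable_on {r+e..1}"
proof (rule integrable_continuous_interval)
  show "continuous_on {r+e..1} (\<lambda>s. f s / (s - r))"
    using e r by (intro continuous_intros continuous_on_subset[OF f]) auto
qed

lemma int_cm: "integral S (\<lambda>x. (c::real) * h x) = c * integral S h"
  by simp

lemma has_cpv_lin:
  assumes r: "-1 < r" "r < 1" and f: "continuous_on {-1..1} f" and g: "continuous_on {-1..1} g"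
    and hf: "has_cpv f r A" and hg: "has_cpv g r B"
  shows "has_cpv (\<lambda>s. a * f s + b * g s) r (a * A + b * B)"
proof -
  have "eventually (\<lambda>e. a * Sint f r e + b * Sint g r e = Sint (\<lambda>s. a * f s + b * g s) r e) (at_right 0)"
    using ev_pos
  proof (rule eventually_mono)
    fix e :: real assume e: "e > 0"
    have i1: "(\<lambda>s. a * (f s / (s - r))) integrable_on {-1..r-e}" "(\<lambda>s. b * (g s / (s - r))) integrable_on {-1..r-e}"
      "(\<lambda>s. a * (f s / (s - r))) integrable_on {r+e..1}" "(\<lambda>s. b * (g s / (s - r))) integrable_on {r+e..1}"
      by (rule integrable_on_mult_right, rule int_left[OF r e f], rule integrable_on_mult_right, rule int_left[OF r e g],
          rule integrable_on_mult_right, rule int_right[OF r e f], rule integrable_on_mult_right, rule int_right[OF r e g])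
    have e1: "(\<lambda>s. (a * f s + b * g s) / (s - r)) = (\<lambda>s. a * (f s / (s - r)) + b * (g s / (s - r)))"
      by (auto simp: field_simps add_divide_distrib)
    show "a * Sint f r e + b * Sint g r e = Sint (\<lambda>s. a * f s + b * g s) r e"
      unfolding Sint_def e1 integral_add[OF i1(1,2)] integral_add[OF i1(3,4)] int_cm
      by (simp add: algebra_simps)
  qed
  moreover have "((\<lambda>e. a * Sint f r e + b * Sint g r e) \<longlongrightarrow> a * A + b * B) (at_right 0)"
    using hf hg unfolding has_cpv_def by (intro tendsto_intros)
  ultimately show ?thesis unfolding has_cpv_def by (rule Lim_transform_eventually[rotated])
qed

lemma tendsto_shift:
  fixes h :: "real \<Rightarrow> real"
  assumes "isCont h r"
  shows "((\<lambda>e. h (r - e)) \<longlongrightarrow> h r) (at_right 0)" "((\<lambda>e. h (r + e)) \<longlongrightarrow> h r) (at_right 0)"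
proof -
  have "((\<lambda>e::real. r - e) \<longlongrightarrow> r) (at_right 0)" "((\<lambda>e::real. r + e) \<longlongrightarrow> r) (at_right 0)"
    by (auto intro!: tendsto_eq_intros)
  then show "((\<lambda>e. h (r - e)) \<longlongrightarrow> h r) (at_right 0)" "((\<lambda>e. h (r + e)) \<longlongrightarrow> h r) (at_right 0)"
    using isCont_tendsto_compose[OF assms] by auto
qed

lemma has_cpv_proper:
  assumes r: "-1 < r" "r < 1" and g: "continuous_on {-1..1} g"
  shows "has_cpv (\<lambda>s. (s - r) * g s) r (integral {-1..1} g)"
proof -
  have gi: "g integrable_on {-1..1}" using g by (rule integrable_continuous_interval)
  define F where "F x = integral {-1..x} g" for x
  define F' where "F' x = integral {x..1} g" for x
  have cF: "isCont F r" unfolding F_def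
    by (rule continuous_on_interior[OF indefinite_integral_continuous_1[OF gi]]) (use r in auto)
  have cF': "isCont F' r" unfolding F'_def
    by (rule continuous_on_interior[OF indefinite_integral_continuous_1'[OF gi]]) (use r in auto)
  have ev: "eventually (\<lambda>e. F (r - e) + F' (r + e) = Sint (\<lambda>s. (s - r) * g s) r e) (at_right 0)"
    using ev_pos
  proof (rule eventually_mono)
    fix e :: real assume e: "e > 0"
    show "F (r - e) + F' (r + e) = Sint (\<lambda>s. (s - r) * g s) r e"
      unfolding Sint_def F_def F'_def
      by (intro arg_cong2[where f="(+)"] integral_cong) (use e in auto)
  qed
  have lim: "((\<lambda>e. F (r - e) + F' (r + e)) \<longlongrightarrow> F r + F' r) (at_right 0)"
    using tendsto_shift[OF cF] tendsto_shift[OF cF'] by (intro tendsto_intros) auto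
  have eq: "F r + F' r = integral {-1..1} g"
    unfolding F_def F'_def using r by (intro Henstock_Kurzweil_Integration.integral_combine gi) auto
  show ?thesis unfolding has_cpv_def using Lim_transform_eventually[OF lim ev] unfolding eq .
qed


lemma ftc_real:
  fixes f f' :: "real \<Rightarrow> real"
  assumes "a \<le> b" "continuous_on {a..b} f" "\<And>x. a < x \<Longrightarrow> x < b \<Longrightarrow> (f has_real_derivative f' x) (at x)"
  shows "integral {a..b} f' = f b - f a"
  using fundamental_theorem_of_calculus_interior[of a b f f'] assms
  by (auto simp: has_real_derivative_iff_has_vector_derivative integral_unique)

lemma dsk: "((\<lambda>t. if k = 0 then t else sin (real k * t) / real k) has_real_derivative cos (real k * t)) (at t)"
proof (cases "k = 0")
  case True then show ?thesis by (auto intro!: derivative_eq_intros)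
next
  case False then show ?thesis by (auto intro!: derivative_eq_intros)
qed

lemma w_pos: "-1 < s \<Longrightarrow> s < 1 \<Longrightarrow> w s > 0"
  by (simp add: w_def abs_square_less_1 abs_less_iff)

lemma cont_w: "continuous_on A w"
  unfolding w_def by (intro continuous_intros)

lemma orth: "integral {-1..1} (\<lambda>s. w s * Uf k s) = (if k = 0 then pi/2 else 0)"
proof -
  define G where "G t = (if k = 0 then t else sin (real k * t) / real k)" for t
  define F where "F t = (sin ((real k + 2) * t) / (real k + 2) - G t) / 2" for t
  have dF: "(F has_real_derivative - (sin ((real k + 1) * t) * sin t)) (at t)" for t
  proof -
    have "(F has_real_derivative (cos ((real k + 2) * t) - cos (real k * t)) / 2) (at t)"
      unfolding F_def[abs_def] G_def[abs_def] by (auto intro!: derivative_eq_intros dsk)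
    moreover have "(cos ((real k + 2) * t) - cos (real k * t)) / 2 = - (sin ((real k + 1) * t) * sin t)"
    proof -
      have "cos ((real k + 2) * t) = cos ((real k + 1) * t + t)" "cos (real k * t) = cos ((real k + 1) * t - t)"
        by (simp_all add: algebra_simps)
      then show ?thesis by (simp add: cos_add cos_diff)
    qed
    ultimately show ?thesis by simp
  qed
  define H where "H s = F (arccos s)" for s
  have "integral {-1..1} (\<lambda>s. w s * Uf k s) = H 1 - H (-1)"
  proof (rule ftc_real)
    have cF: "continuous_on UNIV F" by (rule DERIV_continuous_on[OF dF[THEN DERIV_subset]]) auto
    show "continuous_on {-1..1} H" unfolding H_def
      by (rule continuous_on_compose2[OF cF continuous_on_arccos']) auto
  next
    fix s :: real assume s: "-1 < s" "s < 1"
    have ws: "w s > 0" using w_pos[OF s] .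
    have st: "sin (arccos s) = w s" using s by (simp add: sin_arccos w_def)
    have "(H has_real_derivative (- (sin ((real k + 1) * arccos s) * sin (arccos s))) * inverse (- sqrt (1 - s\<^sup>2))) (at s)"
      unfolding H_def using DERIV_chain2[OF dF DERIV_arccos[OF s]] .
    moreover have "(- (sin ((real k + 1) * arccos s) * sin (arccos s))) * inverse (- sqrt (1 - s\<^sup>2)) = w s * Uf k s"
    proof -
      have "w s * Uf k s = sin ((real k + 1) * arccos s)" using Uf_cos[of k "arccos s"] s st
        by (simp add: cos_arccos mult.commute)
      then show ?thesis using st ws by (simp add: w_def[symmetric] field_simps)
    qed
    ultimately show "(H has_real_derivative w s * Uf k s) (at s)" by simp
  qed simp
  also have "H 1 - H (-1) = (if k = 0 then pi/2 else 0)"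
  proof -
    have a: "sin ((real k + 2) * pi) = 0" using sin_npi[of "k+2"] by (simp add: add.commute)
    have b: "sin (real k * pi) = 0" by (rule sin_npi)
    show ?thesis by (simp add: H_def F_def G_def a b)
  qed
  finally show ?thesis .
qed


lemma dw: assumes "-1 < s" "s < 1" shows "(w has_real_derivative (- s / w s)) (at s)"
proof -
  have "1 - s^2 > 0" using assms by (simp add: abs_square_less_1 abs_less_iff)
  then show ?thesis unfolding w_def[abs_def]
    by (auto intro!: derivative_eq_intros simp: field_simps power2_eq_square)
qed

lemma alg_J1:
  fixes s r c v :: real
  assumes v: "v > 0" and B: "1 - r * s + c * v > 0" and sr: "s \<noteq> r"
    and w2: "v^2 = 1 - s^2" and c2: "c^2 = 1 - r^2"
  shows "- s / v - r * inverse v + c * (1 / (s - r) - (- r + c * (- s / v)) / (1 - r * s + c * v)) = v / (s - r)"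
proof -
  define D where "D = 1 - r * s + c * v"
  have D0: "D \<noteq> 0" using B by (simp add: D_def)
  have v0: "v \<noteq> 0" using v by simp
  have sr0: "s - r \<noteq> 0" using sr by simp
  define X where "X = - s / v - r * inverse v + c * (1 / (s - r) - (- r + c * (- s / v)) / D)"
  have "X * (v * (s - r) * D) = - s * (s - r) * D - r * (s - r) * D + c * (v * D + (r * v + c * s) * (s - r))"
    unfolding X_def using v0 sr0 D0 by (simp add: field_simps)
  also have "\<dots> = v / (s - r) * (v * (s - r) * D)"
    using v0 sr0 w2 c2 unfolding D_def by (simp add: field_simps) algebra
  finally have "X = v / (s - r)" using v0 sr0 D0 by (simp add: eq_divide_eq)
  then show ?thesis unfolding X_def D_def .
qed

lemma w_nonneg: "-1 \<le> s \<Longrightarrow> s \<le> 1 \<Longrightarrow> w s \<ge> 0"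
  using abs_square_le_1[of s] by (auto simp: w_def)

lemma w_sq: assumes "-1 \<le> s" "s \<le> 1" shows "(w s)^2 = 1 - s^2"
proof -
  have "s^2 \<le> 1" using abs_square_le_1[of s] assms by auto
  then show ?thesis by (simp add: w_def)
qed

lemma J1:
  assumes r: "-1 < r" "r < 1"
  shows "has_cpv w r (- pi * r)"
proof -
  define c where "c = w r"
  have c0: "c > 0" using w_pos[OF r] by (simp add: c_def)
  have c2: "c^2 = 1 - r^2" unfolding c_def using r by (intro w_sq) auto
  define B where "B s = 1 - r * s + c * w s" for s
  have Bpos: "B s > 0" if "-1 \<le> s" "s \<le> 1" for s
  proof -
    have "\<bar>r * s\<bar> < 1" using r that by (auto simp: abs_mult abs_less_iff abs_le_iff intro: mult_le_one order.strict_trans1) (smt (verit) mult_le_cancel_left1 mult_minus_left mult_le_one mult_nonneg_nonneg mult_nonpos_nonpos)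
    then show ?thesis unfolding B_def using c0 w_nonneg[of s] that by (smt (verit) mult_nonneg_nonneg abs_less_iff)
  qed
  have dB: "(B has_real_derivative (- r + c * (- s / w s))) (at s)" if "-1 < s" "s < 1" for s
    unfolding B_def[abs_def] using dw[OF that] by (auto intro!: derivative_eq_intros)
  have dlB: "((\<lambda>s. ln (B s)) has_real_derivative (- r + c * (- s / w s)) / B s) (at s)" if "-1 < s" "s < 1" for s
    using DERIV_chain2[OF DERIV_ln[OF Bpos] dB[OF that]] that by (simp add: divide_inverse mult.commute)
  define Psi where "Psi s = w s - r * arcsin s - c * ln (B s)" for s
  have dPsi: "(Psi has_real_derivative (- s / w s - r * inverse (sqrt (1 - s^2)) - c * ((- r + c * (- s / w s)) / B s))) (at s)"
    if "-1 < s" "s < 1" for s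
  proof -
    have a: "((\<lambda>z. r * arcsin z) has_real_derivative r * inverse (sqrt (1 - s^2))) (at s)"
      by (rule DERIV_cmult[OF DERIV_arcsin[OF that]])
    have b: "((\<lambda>z. c * ln (B z)) has_real_derivative c * ((- r + c * (- s / w s)) / B s)) (at s)"
      by (rule DERIV_cmult[OF dlB[OF that]])
    show ?thesis unfolding Psi_def[abs_def] by (intro DERIV_diff dw a b that)
  qed
  have cPsi: "isCont Psi r" using dPsi[OF r] by (rule DERIV_isCont)
  define Am where "Am s = Psi s + c * ln (r - s)" for s
  define Ap where "Ap s = Psi s + c * ln (s - r)" for s
  have dA: "w s / (s - r) = - s / w s - r * inverse (sqrt (1 - s^2)) - c * ((- r + c * (- s / w s)) / B s) + c * (1 / (s - r))"
    if "-1 < s" "s < 1" "s \<noteq> r" for s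
  proof -
    have "- s / w s - r * inverse (w s) + c * (1 / (s - r) - (- r + c * (- s / w s)) / (1 - r * s + c * w s)) = w s / (s - r)"
      using that by (intro alg_J1 w_pos c2 w_sq) (use Bpos[of s] in \<open>auto simp: B_def\<close>)
    then show ?thesis by (simp add: B_def w_def algebra_simps)
  qed
  have fm: "- (c / (r - s)) = c / (s - r)" for s by (simp add: minus_divide_right)
  have cB: "continuous_on {-1..1} B" unfolding B_def[abs_def] by (intro continuous_intros cont_w)
  have clB: "continuous_on {-1..1} (\<lambda>s. ln (B s))" by (rule continuous_on_ln[OF cB]) (use Bpos in force)
  have contPsi: "continuous_on {-1..1} Psi" unfolding Psi_def[abs_def]
    by (intro continuous_on_diff continuous_on_mult continuous_on_const cont_w continuous_on_arcsin' clB)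
  have Sform: "Sint w r e = Psi (r - e) - Psi (r + e) - pi * r" if e: "e > 0" "e < 1 + r" "e < 1 - r" for e
  proof -
    have i1: "integral {-1..r-e} (\<lambda>s. w s / (s - r)) = Am (r - e) - Am (-1)"
    proof (rule ftc_real)
      show "continuous_on {-1..r-e} Am" unfolding Am_def
        using e by (intro continuous_intros continuous_on_subset[OF contPsi]) auto
    next
      fix s assume s: "-1 < s" "s < r - e"
      then have "((\<lambda>s. ln (r - s)) has_real_derivative 1 / (s - r)) (at s)" using e
        by (auto intro!: derivative_eq_intros simp: field_simps)
      then show "(Am has_real_derivative w s / (s - r)) (at s)" unfolding Am_def[abs_def]
        using dA[of s] s e by (auto intro!: derivative_eq_intros dPsi simp: fm)
    qed (use e in auto)
    have i2: "integral {r+e..1} (\<lambda>s. w s / (s - r)) = Ap 1 - Ap (r + e)"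
    proof (rule ftc_real)
      show "continuous_on {r+e..1} Ap" unfolding Ap_def
        using e by (intro continuous_intros continuous_on_subset[OF contPsi]) auto
    next
      fix s assume s: "r + e < s" "s < 1"
      then have "((\<lambda>s. ln (s - r)) has_real_derivative 1 / (s - r)) (at s)" using e
        by (auto intro!: derivative_eq_intros simp: field_simps)
      then show "(Ap has_real_derivative w s / (s - r)) (at s)" unfolding Ap_def[abs_def]
        using dA[of s] s e by (auto intro!: derivative_eq_intros dPsi)
    qed (use e in auto)
    have Am1: "Am (-1) = pi / 2 * r" unfolding Am_def Psi_def B_def by (simp add: w_def add.commute)
    have Ap1: "Ap 1 = - (pi / 2 * r)" unfolding Ap_def Psi_def B_def by (simp add: w_def)
    show ?thesis unfolding Sint_def i1 i2 Am1 Ap1 by (simp add: Am_def Ap_def)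
  qed
  have ev: "eventually (\<lambda>e. Psi (r - e) - Psi (r + e) - pi * r = Sint w r e) (at_right 0)"
    unfolding eventually_at_right_field using r
    by (intro exI[of _ "min (1 + r) (1 - r)"]) (auto simp: Sform)
  have "((\<lambda>e. Psi (r - e) - Psi (r + e) - pi * r) \<longlongrightarrow> Psi r - Psi r - pi * r) (at_right 0)"
    using tendsto_shift[OF cPsi] by (intro tendsto_intros)
  then show ?thesis unfolding has_cpv_def using ev by (auto intro: Lim_transform_eventually)
qed



lemma cont_Uf: "continuous_on A (Uf k)"
  by (rule DERIV_continuous_on[OF DU[THEN DERIV_subset]]) auto

lemma cont_wU: "continuous_on A (\<lambda>s. w s * Uf k s)"
  by (intro continuous_intros cont_w cont_Uf)

lemma int_2wU: "integral {-1..1} (\<lambda>s. 2 * (w s * Uf k s)) = (if k = 0 then pi else 0)"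
  using orth[of k] by (simp add: int_cm)

lemma has_cpv_cong2:
  assumes r: "-1 < r" "r < 1" and fg: "\<And>s. -1 \<le> s \<Longrightarrow> s \<le> 1 \<Longrightarrow> f s = g s" and LM: "L = M" and h: "has_cpv f r L"
  shows "has_cpv g r M"
  using has_cpv_cong[OF r fg h] LM by simp

lemma Jk:
  assumes r: "-1 < r" "r < 1"
  shows "has_cpv (\<lambda>s. w s * Uf k s) r (- pi * Tf (Suc k) r)"
proof (induction k rule: two_induct)
  case 1
  show ?case using has_cpv_cong[OF r _ J1[OF r], of "\<lambda>s. w s * Uf 0 s"] by simp
next
  case 2
  have p: "has_cpv (\<lambda>s. (s - r) * (2 * (w s * Uf 0 s))) r pi"
  proof -
    have "continuous_on {-1..1} (\<lambda>s. 2 * (w s * Uf 0 s))" by (intro continuous_intros cont_wU)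
    from has_cpv_proper[OF r this] show ?thesis unfolding int_2wU by simp
  qed
  have "has_cpv (\<lambda>s. 1 * ((s - r) * (2 * (w s * Uf 0 s))) + (2 * r) * w s) r (1 * pi + (2 * r) * (- pi * r))"
    by (rule has_cpv_lin[OF r _ cont_w p J1[OF r]]) (intro continuous_intros cont_wU)
  then show ?case
    by (rule has_cpv_cong2[OF r, rotated 2]) (simp_all add: algebra_simps power2_eq_square)
next
  case (3 k)
  have p: "has_cpv (\<lambda>s. (s - r) * (2 * (w s * Uf (Suc k) s))) r 0"
  proof -
    have "continuous_on {-1..1} (\<lambda>s. 2 * (w s * Uf (Suc k) s))" by (intro continuous_intros cont_wU)
    from has_cpv_proper[OF r this] show ?thesis unfolding int_2wU by simp
  qed
  have h1: "has_cpv (\<lambda>s. 1 * ((s - r) * (2 * (w s * Uf (Suc k) s))) + (2 * r) * (w s * Uf (Suc k) s)) r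
        (1 * 0 + (2 * r) * (- pi * Tf (Suc (Suc k)) r))"
    by (rule has_cpv_lin[OF r _ cont_wU p 3(2)]) (intro continuous_intros cont_wU)
  have h2: "has_cpv (\<lambda>s. 1 * (1 * ((s - r) * (2 * (w s * Uf (Suc k) s))) + (2 * r) * (w s * Uf (Suc k) s)) + (-1) * (w s * Uf k s)) r
        (1 * (1 * 0 + (2 * r) * (- pi * Tf (Suc (Suc k)) r)) + (-1) * (- pi * Tf (Suc k) r))"
    by (rule has_cpv_lin[OF r _ cont_wU h1 3(1)]) (intro continuous_intros cont_wU)
  show ?case using h2
    by (rule has_cpv_cong2[OF r, rotated 2]) (simp_all add: algebra_simps)
qed



lemma has_cpv_zero: "has_cpv (\<lambda>s. 0) r 0"
  unfolding has_cpv_def Sint_def by simp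

lemma has_cpv_sum:
  assumes r: "-1 < r" "r < 1" and fin: "finite J"
    and c: "\<And>j. continuous_on {-1..1} (f j)" and h: "\<And>j. j \<in> J \<Longrightarrow> has_cpv (f j) r (L j)"
  shows "has_cpv (\<lambda>s. \<Sum>j\<in>J. a j * f j s) r (\<Sum>j\<in>J. a j * L j)"
  using fin h
proof (induction J rule: finite_induct)
  case empty then show ?case by (simp add: has_cpv_zero)
next
  case (insert x F)
  have hF: "has_cpv (\<lambda>s. \<Sum>j\<in>F. a j * f j s) r (\<Sum>j\<in>F. a j * L j)" using insert by auto
  have cF: "continuous_on {-1..1} (\<lambda>s. \<Sum>j\<in>F. a j * f j s)" by (intro continuous_intros c)
  have "has_cpv (\<lambda>s. a x * f x s + 1 * (\<Sum>j\<in>F. a j * f j s)) r (a x * L x + 1 * (\<Sum>j\<in>F. a j * L j))"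
    by (rule has_cpv_lin[OF r c cF]) (use insert in auto)
  then show ?case using insert by simp
qed

lemma cpv_main:
  fixes m n :: nat and x :: real
  assumes m: "m \<ge> 1" and n: "n \<ge> 2*m" and x: "-1 < x" "x < 1"
  shows "cpv_integral (\<lambda>s. chebT n s * (1 - s\<^sup>2) powr (real m - 1/2)) x =
    (\<Sum>j=0..2*m-1. acoef m j * (- pi * Tf (Suc (n-2*m+2*j)) x))"
proof (rule cpv_eq)
  have "has_cpv (\<lambda>s. \<Sum>j=0..2*m-1. acoef m j * (w s * Uf (n-2*m+2*j) s)) x
     (\<Sum>j=0..2*m-1. acoef m j * (- pi * Tf (Suc (n-2*m+2*j)) x))"
    by (rule has_cpv_sum[OF x], simp, rule cont_wU, rule Jk[OF x])
  then show "has_cpv (\<lambda>s. chebT n s * (1 - s\<^sup>2) powr (real m - 1/2)) x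
    (\<Sum>j=0..2*m-1. acoef m j * (- pi * Tf (Suc (n-2*m+2*j)) x))"
    by (rule has_cpv_cong[OF x, rotated]) (simp add: D_repr[OF m n])
qed



lemma deriv_open:
  assumes "\<And>y. -1 < y \<Longrightarrow> y < 1 \<Longrightarrow> f y = g y" and "(g has_real_derivative D) (at x)" and "-1 < x" "x < 1"
  shows "deriv f x = D"
proof (rule DERIV_imp_deriv)
  show "(f has_real_derivative D) (at x)"
    by (rule has_field_derivative_transform_within_open[OF assms(2), of "{-1<..<1}"]) (use assms in auto)
qed

theorem mainTheorem7:
  fixes m n :: nat and r :: real
  assumes "m \<ge> 1" and "n \<ge> 2 * m + 3" and "\<bar>r\<bar> < 1"
  shows "hadamard_fp (\<lambda>s. chebT n s * (1 - s\<^sup>2) powr (real m - 1/2)) 4 r =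
    (-1) ^ (m + 1) * (1/2) ^ (2 * m + 2) * (1/3) * (pi / (1 - r\<^sup>2)\<^sup>2) *
    (\<Sum>j = 0..2 * m - 1.
       (let p = n - 2 * m + 2 * j in
        (-1) ^ j * real ((2 * m - 1) choose j) * (real p + 1) *
        ((real p + 2) * (real p + 3) * chebU (p - 2) r
         - (2 * (real p)\<^sup>2 + 4 * real p - 6) * chebU p r
         + real p * (real p - 1) * chebU (p + 2) r)))"
proof -
  have m: "m \<ge> 1" and n: "n \<ge> 2 * m" using assms by auto
  have r: "-1 < r" "r < 1" using assms by auto
  define Df where "Df = (\<lambda>s. chebT n s * (1 - s\<^sup>2) powr (real m - 1/2))"
  define P where "P j = n - 2 * m + 2 * j" for j
  define G where "G x = (\<Sum>j=0..2*m-1. acoef m j * (- pi * Tf (Suc (P j)) x))" for x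
  define G1 where "G1 x = (\<Sum>j=0..2*m-1. acoef m j * (- pi * (real (Suc (P j)) * Uf (P j) x)))" for x
  define G2 where "G2 x = (\<Sum>j=0..2*m-1. acoef m j * (- pi * (real (Suc (P j)) * dU (P j) x)))" for x
  define G3 where "G3 x = (\<Sum>j=0..2*m-1. acoef m j * (- pi * (real (Suc (P j)) * ddU (P j) x)))" for x
  have dG: "(G has_real_derivative G1 x) (at x)" for x
    unfolding G_def[abs_def] G1_def by (intro DERIV_sum DERIV_cmult DT)
  have dG1: "(G1 has_real_derivative G2 x) (at x)" for x
    unfolding G1_def[abs_def] G2_def by (intro DERIV_sum DERIV_cmult DU)
  have dG2: "(G2 has_real_derivative G3 x) (at x)" for x
    unfolding G2_def[abs_def] G3_def by (intro DERIV_sum DERIV_cmult DDU)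
  have h1: "hadamard_fp Df 1 y = G y" if "-1 < y" "y < 1" for y
    using cpv_main[OF m n that] by (simp add: Df_def G_def P_def)
  have h2: "hadamard_fp Df 2 y = G1 y" if "-1 < y" "y < 1" for y
  proof -
    have "hadamard_fp Df 2 y = deriv (hadamard_fp Df 1) y" by (simp add: numeral_2_eq_2)
    also have "\<dots> = G1 y" by (rule deriv_open[OF h1 dG that])
    finally show ?thesis .
  qed
  have h3: "hadamard_fp Df 3 y = G2 y / 2" if "-1 < y" "y < 1" for y
  proof -
    have "hadamard_fp Df 3 y = deriv (hadamard_fp Df 2) y / 2" by (simp add: numeral_3_eq_3 numeral_2_eq_2)
    also have "deriv (hadamard_fp Df 2) y = G2 y" by (rule deriv_open[OF h2 dG1 that])
    finally show ?thesis .
  qed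
  have h4: "hadamard_fp Df 4 r = G3 r / 6"
  proof -
    have e4: "(4::nat) = Suc (Suc 2)" by simp
    have "hadamard_fp Df 4 r = deriv (hadamard_fp Df 3) r / 3" unfolding e4 by (simp add: numeral_3_eq_3)
    also have "deriv (hadamard_fp Df 3) r = G3 r / 2"
      by (rule deriv_open[OF h3 DERIV_cdivide[OF dG2] r])
    finally show ?thesis by simp
  qed
  have "r^2 < 1" using abs_square_less_1[of r] r by auto
  then have q0: "(1 - r^2)^2 \<noteq> 0" by simp
  have half: "(1/2::real)^(2*m+2) = (1/2)^(2*m-1) * (1/8)"
  proof -
    have "2*m+2 = (2*m-1) + 3" using m by simp
    then show ?thesis by (simp only: power_add) (simp add: eval_nat_numeral)
  qed
  have sg: "(-1::real)^(m+1) = - ((-1)^m)" by simp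
  have "G3 r / 6 = (-1) ^ (m + 1) * (1/2) ^ (2 * m + 2) * (1/3) * (pi / (1 - r\<^sup>2)\<^sup>2) *
    (\<Sum>j = 0..2 * m - 1.
       (let p = n - 2 * m + 2 * j in
        (-1) ^ j * real ((2 * m - 1) choose j) * (real p + 1) *
        ((real p + 2) * (real p + 3) * chebU (p - 2) r
         - (2 * (real p)\<^sup>2 + 4 * real p - 6) * chebU p r
         + real p * (real p - 1) * chebU (p + 2) r)))"
    unfolding G3_def sum_divide_distrib sum_distrib_left
  proof (rule sum.cong[OF refl])
    fix j assume j: "j \<in> {0..2*m-1}"
    define p where "p = n - 2 * m + 2 * j"
    have p2: "p \<ge> 2" using assms(2) by (simp add: p_def)
    define Bk where "Bk = (real p + 2) * (real p + 3) * Uf (p - 2) r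
         - (2 * (real p)\<^sup>2 + 4 * real p - 6) * Uf p r + real p * (real p - 1) * Uf (p + 2) r"
    have dd: "ddU p r = (1/4) * Bk / (1 - r^2)^2"
      using final_id[OF p2, of r] q0 unfolding Bk_def by (simp add: field_simps)
    have cu: "chebU k r = Uf k r" for k using chebU_Uf[OF r] .
    show "acoef m j * (- pi * (real (Suc (P j)) * ddU (P j) r)) / 6 =
      (-1) ^ (m + 1) * (1/2) ^ (2 * m + 2) * (1/3) * (pi / (1 - r\<^sup>2)\<^sup>2) *
       (let p = n - 2 * m + 2 * j in
        (-1) ^ j * real ((2 * m - 1) choose j) * (real p + 1) *
        ((real p + 2) * (real p + 3) * chebU (p - 2) r
         - (2 * (real p)\<^sup>2 + 4 * real p - 6) * chebU p r
         + real p * (real p - 1) * chebU (p + 2) r))"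
      unfolding Let_def P_def p_def[symmetric] cu Bk_def[symmetric] dd half sg acoef_def
      using q0 by (simp add: field_simps)
  qed
  then show ?thesis using h4 unfolding Df_def by simp
qed

end
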